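(* Let $(X_n,F_n)_{n\ge1}$ be a process where each $X_n$ is an $\mathbb X$-valued random variable and each $F_n$ is a random probability measure on $\mathbb X$. Assume: (i) conditionally on the whole sequence $(F_n)_{n\ge1}$, the $X_n$ are independent and the conditional distribution of $X_n$ is $F_n$; (ii) $(F_n)_{n\ge1}$ is a measure-valued martingale with respect to its natural filtration, i.e. $\mathbb E[F_{n+1}(A)\mid F_1,\dots,F_n]=F_n(A)$ a.s. for every $n\ge1$ and $A\in\mathcal X$. Then $(X_n)_{n\ge1}$ is c.i.d. (with respect to its natural filtration).
   Context: All random elements are defined on a probability space $(\Omega,\mathcal F,\mathbb P)$; $\mathbb X$ is a Polish space with Borel $\sigma$-algebra $\mathcal X$. Spaces of probability measures carry the topology of weak convergence and the $\sigma$-algebra generated by the evaluation maps; a random probability measure is a random element of such a space. A sequence $(X_n)_{n\ge1}$ of $\mathbb X$-valued random variables adapted to a filtration $\mathcal G=(\mathcal G_n)_{n\ge0}$ is $\mathcal G$-c.i.d. (conditionally identically distributed) if $\mathbb E[f(X_{n+k})\mid\mathcal G_n]=\mathbb E[f(X_{n+1})\mid\mathcal G_n]$ a.s. for all $k\ge1$, $n\ge0$ and all bounded measurable $f:\mathbb X\to\mathbb R$; it is c.i.d. if this holds for its natural filtration $\mathcal G_n=\sigma(X_1,\dots,X_n)$, $\mathcal G_0=\{\emptyset,\Omega\}$. *)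

theory Defs
  imports "HOL-Probability.Probability"
begin

text \<open>For I = {1..n} this is the natural filtration at time n;
  for I = {} it is the trivial sigma-algebra.\<close>
definition gen_sigma :: "'b measure \<Rightarrow> 'c measure \<Rightarrow> (nat \<Rightarrow> 'b \<Rightarrow> 'c) \<Rightarrow> nat set \<Rightarrow> 'b measure" where
  "gen_sigma M N Y I = sigma (space M) {Y i -` B \<inter> space M | i B. i \<in> I \<and> B \<in> sets N}"

end

theory Submission
  imports Defs
begin

lemma gen_sigma_gen_sub: "{Y i -` B \<inter> space M | i B. i \<in> I \<and> B \<in> sets N} \<subseteq> Pow (space M)"
  by auto

lemma gen_sigma_space[simp]: "space (gen_sigma M N Y I) = space M"
  unfolding gen_sigma_def by (rule space_measure_of[OF gen_sigma_gen_sub])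

lemma gen_sigma_sets: "sets (gen_sigma M N Y I) = sigma_sets (space M) {Y i -` B \<inter> space M | i B. i \<in> I \<and> B \<in> sets N}"
  unfolding gen_sigma_def by (rule sets_measure_of[OF gen_sigma_gen_sub])

lemma gen_sigma_subalg:
  assumes "\<And>i. i \<in> I \<Longrightarrow> Y i \<in> M \<rightarrow>\<^sub>M N"
  shows "subalgebra M (gen_sigma M N Y I)"
  unfolding subalgebra_def gen_sigma_sets gen_sigma_space
proof
  show "sigma_sets (space M) {Y i -` B \<inter> space M |i B. i \<in> I \<and> B \<in> sets N} \<subseteq> sets M"
    by (rule sets.sigma_sets_subset) (use assms in \<open>blast intro: measurable_sets\<close>)
qed simp

lemma gen_sigma_meas:
  assumes "i \<in> I" "Y i \<in> M \<rightarrow>\<^sub>M N"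
  shows "Y i \<in> gen_sigma M N Y I \<rightarrow>\<^sub>M N"
proof (rule measurableI)
  fix x assume "x \<in> space (gen_sigma M N Y I)"
  then show "Y i x \<in> space N" using assms(2) measurable_space by (metis gen_sigma_space)
next
  fix A assume "A \<in> sets N"
  then show "Y i -` A \<inter> space (gen_sigma M N Y I) \<in> sets (gen_sigma M N Y I)"
    unfolding gen_sigma_sets using assms by (auto intro!: sigma_sets.Basic)
qed

lemma gen_sigma_sfs:
  assumes "prob_space M" "\<And>i. i \<in> I \<Longrightarrow> Y i \<in> M \<rightarrow>\<^sub>M N"
  shows "sigma_finite_subalgebra M (gen_sigma M N Y I)"
proof -
  interpret prob_space M by fact
  have "finite_measure_subalgebra M (gen_sigma M N Y I)"
  proof (rule finite_measure_subalgebra.intro)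
    show "finite_measure M" by (rule finite_measure_axioms)
    show "finite_measure_subalgebra_axioms M (gen_sigma M N Y I)"
      unfolding finite_measure_subalgebra_axioms_def by (rule gen_sigma_subalg[OF assms(2)])
  qed
  then show ?thesis by (rule finite_measure_subalgebra_is_sigma_finite)
qed


locale cid_setting = prob_space M for M :: "'w measure" +
  fixes X :: "nat \<Rightarrow> 'w \<Rightarrow> 'a :: polish_space"
    and F :: "nat \<Rightarrow> 'w \<Rightarrow> 'a measure"
  assumes X_meas: "\<And>n. n \<ge> 1 \<Longrightarrow> X n \<in> M \<rightarrow>\<^sub>M borel"
    and F_meas: "\<And>n. n \<ge> 1 \<Longrightarrow> F n \<in> M \<rightarrow>\<^sub>M prob_algebra borel"
    and cond_indep: "\<And>I A. finite I \<Longrightarrow> I \<subseteq> {1..} \<Longrightarrow> (\<And>i. i \<in> I \<Longrightarrow> A i \<in> sets borel) \<Longrightarrow>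
        AE \<omega> in M. real_cond_exp M (gen_sigma M (prob_algebra borel) F {1..})
              (\<lambda>\<omega>. \<Prod>i\<in>I. indicator (A i) (X i \<omega>)) \<omega>
            = (\<Prod>i\<in>I. measure (F i \<omega>) (A i))"
    and mart: "\<And>n A. n \<ge> 1 \<Longrightarrow> A \<in> sets borel \<Longrightarrow>
        AE \<omega> in M. real_cond_exp M (gen_sigma M (prob_algebra borel) F {1..n})
              (\<lambda>\<omega>. measure (F (Suc n) \<omega>) A) \<omega> = measure (F n \<omega>) A"
begin

lemma Fmeas_M: "i \<ge> 1 \<Longrightarrow> A \<in> sets borel \<Longrightarrow> (\<lambda>\<omega>. measure (F i \<omega>) A) \<in> borel_measurable M"
  by (rule measurable_compose[OF F_meas measurable_measure_prob_algebra])

lemma Fmeas_H: "i \<in> J \<Longrightarrow> i \<ge> 1 \<Longrightarrow> A \<in> sets borel \<Longrightarrow>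
    (\<lambda>\<omega>. measure (F i \<omega>) A) \<in> borel_measurable (gen_sigma M (prob_algebra borel) F J)"
  by (rule measurable_compose[OF gen_sigma_meas[OF _ F_meas] measurable_measure_prob_algebra])

lemma F_bounds: assumes "i \<ge> 1" "\<omega> \<in> space M"
  shows "0 \<le> measure (F i \<omega>) A" "measure (F i \<omega>) A \<le> 1"
proof -
  have "F i \<omega> \<in> space (prob_algebra borel)" using measurable_space[OF F_meas[OF assms(1)] assms(2)] .
  then have "prob_space (F i \<omega>)" by (simp add: space_prob_algebra)
  then show "0 \<le> measure (F i \<omega>) A" "measure (F i \<omega>) A \<le> 1"
    by (simp_all add: prob_space.prob_le_1)
qed

lemma cyl_sets:
  assumes "finite J" "J \<subseteq> {1..}" "\<And>i. i \<in> J \<Longrightarrow> a i \<in> sets borel"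
  shows "{\<omega>\<in>space M. \<forall>i\<in>J. X i \<omega> \<in> a i} \<in> sets M"
proof (rule sets.sets_Collect_finite_All[OF _ assms(1)])
  fix i assume i: "i \<in> J"
  have "{\<omega> \<in> space M. X i \<omega> \<in> a i} = X i -` a i \<inter> space M" by auto
  also have "\<dots> \<in> sets M"
    by (rule measurable_sets[OF X_meas assms(3)[OF i]]) (use i assms(2) in auto)
  finally show "{\<omega> \<in> space M. X i \<omega> \<in> a i} \<in> sets M" .
qed

lemma key1:
  assumes j: "n < j" and a: "\<And>i. a i \<in> sets borel" and B: "B \<in> sets borel"
  shows "measure M ({\<omega>\<in>space M. \<forall>i\<in>{1..n}. X i \<omega> \<in> a i} \<inter> X j -` B)
       = (\<integral>\<omega>. (\<Prod>i\<in>{1..n}. measure (F i \<omega>) (a i)) * measure (F j \<omega>) B \<partial>M)"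
proof -
  define I where "I = insert j {1..n}"
  define C where "C = a(j := B)"
  have I: "finite I" "I \<subseteq> {1..}" using j by (auto simp: I_def)
  have C: "\<And>i. C i \<in> sets borel" using a B by (simp add: C_def)
  define S where "S = {\<omega>\<in>space M. \<forall>i\<in>I. X i \<omega> \<in> C i}"
  have S_eq: "{\<omega>\<in>space M. \<forall>i\<in>{1..n}. X i \<omega> \<in> a i} \<inter> X j -` B = S"
    using j by (auto simp: S_def I_def C_def)
  have S: "S \<in> sets M" unfolding S_def by (rule cyl_sets[OF I C])
  define h where "h = (\<lambda>\<omega>. \<Prod>i\<in>I. indicator (C i) (X i \<omega>) :: real)"
  have h_eq: "h \<omega> = indicator S \<omega>" if "\<omega> \<in> space M" for \<omega>
  proof (cases "\<forall>i\<in>I. X i \<omega> \<in> C i")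
    case True
    then show ?thesis using that by (simp add: h_def S_def indicator_def)
  next
    case False
    then obtain i where "i \<in> I" "X i \<omega> \<notin> C i" by blast
    then have "h \<omega> = 0" unfolding h_def using I(1) \<open>i \<in> I\<close> \<open>X i \<omega> \<notin> C i\<close>
      by (intro prod_zero) (auto intro!: bexI[of _ i])
    then show ?thesis using False by (simp add: S_def indicator_def)
  qed
  have Sfin: "emeasure M S < \<infinity>" using emeasure_finite[of S] by (simp add: less_top[symmetric])
  have hint: "integrable M h"
  proof (subst Bochner_Integration.integrable_cong[OF refl])
    show "h x = indicator S x" if "x \<in> space M" for x using h_eq[OF that] .
  qed (rule integrable_real_indicator[OF S Sfin])
  have hm: "h \<in> borel_measurable M" by (rule borel_measurable_integrable[OF hint])
  interpret Hs: sigma_finite_subalgebra M "gen_sigma M (prob_algebra borel) F {1..}"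
    by (rule gen_sigma_sfs[OF prob_space_axioms]) (use F_meas in auto)
  have pm: "(\<lambda>\<omega>. \<Prod>i\<in>I. measure (F i \<omega>) (C i)) \<in> borel_measurable M"
    by (rule borel_measurable_prod, rule Fmeas_M) (use I C in auto)
  have "measure M S = (\<integral>\<omega>. indicator S \<omega> \<partial>M)" using S by simp
  also have "\<dots> = (\<integral>\<omega>. h \<omega> \<partial>M)" by (rule Bochner_Integration.integral_cong) (simp_all add: h_eq)
  also have "\<dots> = (\<integral>\<omega>. real_cond_exp M (gen_sigma M (prob_algebra borel) F {1..}) h \<omega> \<partial>M)"
    by (rule Hs.real_cond_exp_int(2)[OF hint, symmetric])
  also have "\<dots> = (\<integral>\<omega>. (\<Prod>i\<in>I. measure (F i \<omega>) (C i)) \<partial>M)"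
    by (rule integral_cong_AE) (use pm cond_indep[OF I C] in \<open>simp_all add: h_def\<close>)
  also have "\<dots> = (\<integral>\<omega>. (\<Prod>i\<in>{1..n}. measure (F i \<omega>) (a i)) * measure (F j \<omega>) B \<partial>M)"
  proof (rule Bochner_Integration.integral_cong[OF refl])
    fix \<omega> assume "\<omega> \<in> space M"
    have "j \<notin> {1..n}" using j by auto
    then have "(\<Prod>i\<in>I. measure (F i \<omega>) (C i)) = measure (F j \<omega>) (C j) * (\<Prod>i\<in>{1..n}. measure (F i \<omega>) (C i))"
      by (simp add: I_def)
    also have "(\<Prod>i\<in>{1..n}. measure (F i \<omega>) (C i)) = (\<Prod>i\<in>{1..n}. measure (F i \<omega>) (a i))"
      using j by (intro prod.cong) (auto simp: C_def)
    finally show "(\<Prod>i\<in>I. measure (F i \<omega>) (C i)) = (\<Prod>i\<in>{1..n}. measure (F i \<omega>) (a i)) * measure (F j \<omega>) B"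
      by (simp add: C_def)
  qed
  finally show ?thesis using S_eq by simp
qed

lemma mart_step:
  assumes m: "m \<ge> 1" and \<Phi>: "\<Phi> \<in> borel_measurable (gen_sigma M (prob_algebra borel) F {1..m})"
    and bd: "\<And>\<omega>. \<omega> \<in> space M \<Longrightarrow> \<bar>\<Phi> \<omega>\<bar> \<le> 1" and B: "B \<in> sets borel"
  shows "(\<integral>\<omega>. \<Phi> \<omega> * measure (F (Suc m) \<omega>) B \<partial>M) = (\<integral>\<omega>. \<Phi> \<omega> * measure (F m \<omega>) B \<partial>M)"
proof -
  interpret Hs: sigma_finite_subalgebra M "gen_sigma M (prob_algebra borel) F {1..m}"
    by (rule gen_sigma_sfs[OF prob_space_axioms]) (use F_meas in auto)
  have \<Phi>M: "\<Phi> \<in> borel_measurable M" by (rule measurable_from_subalg[OF Hs.subalg \<Phi>])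
  have gM: "(\<lambda>\<omega>. measure (F (Suc m) \<omega>) B) \<in> borel_measurable M" by (rule Fmeas_M) (use B in auto)
  have gM': "(\<lambda>\<omega>. measure (F m \<omega>) B) \<in> borel_measurable M" by (rule Fmeas_M) (use B m in auto)
  have int: "integrable M (\<lambda>\<omega>. \<Phi> \<omega> * measure (F (Suc m) \<omega>) B)"
  proof (rule integrable_const_bound[where B=1])
    show "AE \<omega> in M. norm (\<Phi> \<omega> * measure (F (Suc m) \<omega>) B) \<le> 1"
    proof (rule AE_I2)
      fix \<omega> assume w: "\<omega> \<in> space M"
      have "\<bar>\<Phi> \<omega>\<bar> \<le> 1" "0 \<le> measure (F (Suc m) \<omega>) B" "measure (F (Suc m) \<omega>) B \<le> 1"
        using bd[OF w] F_bounds[of "Suc m" \<omega> B] w by auto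
      then show "norm (\<Phi> \<omega> * measure (F (Suc m) \<omega>) B) \<le> 1"
        by (simp add: abs_mult mult_le_one)
    qed
    show "(\<lambda>\<omega>. \<Phi> \<omega> * measure (F (Suc m) \<omega>) B) \<in> borel_measurable M"
      using \<Phi>M gM by measurable
  qed
  have "(\<integral>\<omega>. \<Phi> \<omega> * measure (F (Suc m) \<omega>) B \<partial>M)
      = (\<integral>\<omega>. \<Phi> \<omega> * real_cond_exp M (gen_sigma M (prob_algebra borel) F {1..m}) (\<lambda>\<omega>. measure (F (Suc m) \<omega>) B) \<omega> \<partial>M)"
    by (rule Hs.real_cond_exp_intg(2)[OF int \<Phi> gM, symmetric])
  also have "\<dots> = (\<integral>\<omega>. \<Phi> \<omega> * measure (F m \<omega>) B \<partial>M)"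
  proof (rule integral_cong_AE)
    show "(\<lambda>\<omega>. \<Phi> \<omega> * real_cond_exp M (gen_sigma M (prob_algebra borel) F {1..m}) (\<lambda>\<omega>. measure (F (Suc m) \<omega>) B) \<omega>) \<in> borel_measurable M"
      using \<Phi>M borel_measurable_cond_exp2 by measurable
    show "(\<lambda>\<omega>. \<Phi> \<omega> * measure (F m \<omega>) B) \<in> borel_measurable M"
      using \<Phi>M gM' by measurable
    show "AE \<omega> in M. \<Phi> \<omega> * real_cond_exp M (gen_sigma M (prob_algebra borel) F {1..m}) (\<lambda>\<omega>. measure (F (Suc m) \<omega>) B) \<omega> = \<Phi> \<omega> * measure (F m \<omega>) B"
      using mart[OF m B] by eventually_elim simp
  qed
  finally show ?thesis .
qed


lemma mart_iter:
  assumes m: "m \<ge> 1"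
    and \<Phi>: "\<And>m'. m \<le> m' \<Longrightarrow> \<Phi> \<in> borel_measurable (gen_sigma M (prob_algebra borel) F {1..m'})"
    and bd: "\<And>\<omega>. \<omega> \<in> space M \<Longrightarrow> \<bar>\<Phi> \<omega>\<bar> \<le> 1" and B: "B \<in> sets borel"
  shows "(\<integral>\<omega>. \<Phi> \<omega> * measure (F (m + t) \<omega>) B \<partial>M) = (\<integral>\<omega>. \<Phi> \<omega> * measure (F m \<omega>) B \<partial>M)"
proof (induction t)
  case 0
  then show ?case by simp
next
  case (Suc t)
  have "(\<integral>\<omega>. \<Phi> \<omega> * measure (F (m + Suc t) \<omega>) B \<partial>M) = (\<integral>\<omega>. \<Phi> \<omega> * measure (F (Suc (m + t)) \<omega>) B \<partial>M)"
    by simp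
  also have "\<dots> = (\<integral>\<omega>. \<Phi> \<omega> * measure (F (m + t) \<omega>) B \<partial>M)"
    by (rule mart_step[OF _ \<Phi> bd B]) (use m in auto)
  finally show ?case using Suc by simp
qed

lemma cyl_eq:
  assumes k: "k \<ge> 1" and a: "\<And>i. a i \<in> sets borel" and B: "B \<in> sets borel"
  shows "measure M ({\<omega>\<in>space M. \<forall>i\<in>{1..n}. X i \<omega> \<in> a i} \<inter> X (n + k) -` B)
       = measure M ({\<omega>\<in>space M. \<forall>i\<in>{1..n}. X i \<omega> \<in> a i} \<inter> X (n + 1) -` B)"
proof -
  define \<Phi> where "\<Phi> = (\<lambda>\<omega>. \<Prod>i\<in>{1..n}. measure (F i \<omega>) (a i))"
  have \<Phi>m: "\<Phi> \<in> borel_measurable (gen_sigma M (prob_algebra borel) F {1..m'})" if "n + 1 \<le> m'" for m'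
    unfolding \<Phi>_def by (rule borel_measurable_prod, rule Fmeas_H) (use that a in auto)
  have bd: "\<bar>\<Phi> \<omega>\<bar> \<le> 1" if w: "\<omega> \<in> space M" for \<omega>
  proof -
    have "0 \<le> \<Phi> \<omega>" unfolding \<Phi>_def by (rule prod_nonneg) (use F_bounds w in auto)
    moreover have "\<Phi> \<omega> \<le> 1" unfolding \<Phi>_def by (rule prod_le_1) (use F_bounds w in auto)
    ultimately show ?thesis by simp
  qed
  have "measure M ({\<omega>\<in>space M. \<forall>i\<in>{1..n}. X i \<omega> \<in> a i} \<inter> X (n + k) -` B)
      = (\<integral>\<omega>. \<Phi> \<omega> * measure (F (n + 1 + (k - 1)) \<omega>) B \<partial>M)"
    using key1[of n "n + k" a B] k a B by (simp add: \<Phi>_def)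
  also have "\<dots> = (\<integral>\<omega>. \<Phi> \<omega> * measure (F (n + 1) \<omega>) B \<partial>M)"
    by (rule mart_iter[OF _ \<Phi>m bd B]) auto
  also have "\<dots> = measure M ({\<omega>\<in>space M. \<forall>i\<in>{1..n}. X i \<omega> \<in> a i} \<inter> X (n + 1) -` B)"
    using key1[of n "n + 1" a B] a B by (simp add: \<Phi>_def)
  finally show ?thesis .
qed

lemma gen_set_eq:
  assumes k: "k \<ge> 1" and A: "A \<in> sets (gen_sigma M borel X {1..n})" and B: "B \<in> sets borel"
  shows "measure M (A \<inter> (X (n + k) -` B \<inter> space M)) = measure M (A \<inter> (X (n + 1) -` B \<inter> space M))"
proof -
  define P where "P = {{\<omega>\<in>space M. \<forall>i\<in>{1..n}. X i \<omega> \<in> a i} | a. \<forall>i. a i \<in> sets borel}"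
  define S1 where "S1 = X (n + k) -` B \<inter> space M"
  define S2 where "S2 = X (n + 1) -` B \<inter> space M"
  have S1: "S1 \<in> sets M" unfolding S1_def by (rule measurable_sets[OF X_meas B]) (use k in simp)
  have S2: "S2 \<in> sets M" unfolding S2_def by (rule measurable_sets[OF X_meas B]) simp
  have PM: "P \<subseteq> sets M"
  proof
    fix E assume "E \<in> P"
    then obtain a where "E = {\<omega>\<in>space M. \<forall>i\<in>{1..n}. X i \<omega> \<in> a i}" "\<forall>i. a i \<in> sets borel"
      unfolding P_def by blast
    then show "E \<in> sets M" using cyl_sets[of "{1..n}" a] by simp
  qed
  have SPM: "sigma_sets (space M) P \<subseteq> sets M" by (rule sets.sigma_sets_subset[OF PM])
  have PP: "P \<subseteq> Pow (space M)" unfolding P_def by auto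
  have Pint: "Int_stable P" unfolding Int_stable_def P_def
  proof (safe)
    fix a b :: "nat \<Rightarrow> 'a set" assume a: "\<forall>i. a i \<in> sets borel" and b: "\<forall>i. b i \<in> sets borel"
    show "\<exists>c. {\<omega> \<in> space M. \<forall>i\<in>{1..n}. X i \<omega> \<in> a i} \<inter> {\<omega> \<in> space M. \<forall>i\<in>{1..n}. X i \<omega> \<in> b i}
       = {\<omega> \<in> space M. \<forall>i\<in>{1..n}. X i \<omega> \<in> c i} \<and> (\<forall>i. c i \<in> sets borel)"
      using a b by (intro exI[of _ "\<lambda>i. a i \<inter> b i"]) auto
  qed
  have AP: "A \<in> sigma_sets (space M) P"
  proof -
    have EP: "{X i -` B \<inter> space M | i B. i \<in> {1..n} \<and> B \<in> sets borel} \<subseteq> P"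
    proof
      fix E assume "E \<in> {X i -` B \<inter> space M | i B. i \<in> {1..n} \<and> B \<in> sets borel}"
      then obtain i C where E: "E = X i -` C \<inter> space M" "i \<in> {1..n}" "C \<in> sets borel" by blast
      have "E = {\<omega>\<in>space M. \<forall>l\<in>{1..n}. X l \<omega> \<in> (if l = i then C else UNIV)}"
        using E by auto
      moreover have "\<forall>l. (if l = i then C else UNIV) \<in> sets borel" using E by auto
      ultimately show "E \<in> P" unfolding P_def mem_Collect_eq
        by (intro exI[of _ "\<lambda>l. if l = i then C else UNIV"] conjI)
    qed
    show ?thesis using sigma_sets_mono'[OF EP] A unfolding gen_sigma_sets by blast
  qed
  have tot: "measure M S1 = measure M S2"
    using cyl_eq[OF k, of "\<lambda>_. UNIV" B] B unfolding S1_def S2_def by (simp add: Int_commute)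
  have "measure M (A \<inter> S1) = measure M (A \<inter> S2)"
    using Pint PP AP
  proof (induction rule: sigma_sets_induct_disjoint)
    case (basic A)
    then obtain a where A: "A = {\<omega>\<in>space M. \<forall>i\<in>{1..n}. X i \<omega> \<in> a i}" "\<forall>i. a i \<in> sets borel"
      unfolding P_def by blast
    have "A \<inter> S1 = {\<omega>\<in>space M. \<forall>i\<in>{1..n}. X i \<omega> \<in> a i} \<inter> X (n + k) -` B"
      "A \<inter> S2 = {\<omega>\<in>space M. \<forall>i\<in>{1..n}. X i \<omega> \<in> a i} \<inter> X (n + 1) -` B"
      unfolding A S1_def S2_def by auto
    then show ?case using cyl_eq[OF k _ B, of a] A(2) by simp
  next
    case empty
    then show ?case by simp
  next
    case (compl A)
    have AM: "A \<in> sets M" using compl(1) SPM by blast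
    have "(space M - A) \<inter> S1 = S1 - A \<inter> S1" "(space M - A) \<inter> S2 = S2 - A \<inter> S2"
      unfolding S1_def S2_def by auto
    then show ?case using compl(2) tot AM S1 S2 by (simp add: finite_measure_Diff)
  next
    case (union A)
    have AM: "\<And>i. A i \<in> sets M" using union(2) SPM by blast
    have s: "(\<lambda>i. measure M (A i \<inter> S)) sums measure M ((\<Union>i. A i) \<inter> S)" if S: "S \<in> sets M" for S
    proof -
      have "(\<Union>i. A i) \<inter> S = (\<Union>i. A i \<inter> S)" by auto
      moreover have "(\<lambda>i. measure M (A i \<inter> S)) sums measure M (\<Union>i. A i \<inter> S)"
      proof (rule finite_measure_UNION)
        show "range (\<lambda>i. A i \<inter> S) \<subseteq> sets M" using AM S by auto
        show "disjoint_family (\<lambda>i. A i \<inter> S)" using union(1) unfolding disjoint_family_on_def by auto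
      qed
      ultimately show ?thesis by simp
    qed
    show ?case using s[OF S1] s[OF S2] union(3) by (simp add: sums_unique2)
  qed
  then show ?thesis unfolding S1_def S2_def .
qed

lemma main_ae:
  fixes f :: "'a \<Rightarrow> real"
  assumes k: "k \<ge> 1" and fm: "f \<in> borel_measurable borel" and fb: "bounded (range f)"
  shows "AE \<omega> in M. real_cond_exp M (gen_sigma M borel X {1..n}) (\<lambda>\<omega>. f (X (n + k) \<omega>)) \<omega>
                 = real_cond_exp M (gen_sigma M borel X {1..n}) (\<lambda>\<omega>. f (X (n + 1) \<omega>)) \<omega>"
proof -
  interpret Gs: sigma_finite_subalgebra M "gen_sigma M borel X {1..n}"
    by (rule gen_sigma_sfs[OF prob_space_axioms]) (use X_meas in auto)
  obtain K where K: "\<And>x. norm (f x) \<le> K" using fb unfolding bounded_iff by auto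
  have fX: "integrable M (\<lambda>\<omega>. f (X j \<omega>))" if j: "j \<ge> 1" for j
  proof (rule integrable_const_bound[where B=K])
    show "AE x in M. norm (f (X j x)) \<le> K" using K by simp
    show "(\<lambda>\<omega>. f (X j \<omega>)) \<in> borel_measurable M" by (rule measurable_compose[OF X_meas[OF j] fm])
  qed
  have seteq: "set_lebesgue_integral M A (\<lambda>\<omega>. f (X (n + k) \<omega>)) = set_lebesgue_integral M A (\<lambda>\<omega>. f (X (n + 1) \<omega>))"
    if A: "A \<in> sets (gen_sigma M borel X {1..n})" for A
  proof -
    have AM: "A \<in> sets M" using A Gs.subalg unfolding subalgebra_def by blast
    then have AO: "A \<inter> space M \<in> sets M" by simp
    define N where "N j = distr (restrict_space M A) borel (X j)" for j
    have Xr: "X j \<in> restrict_space M A \<rightarrow>\<^sub>M borel" if "j \<ge> 1" for j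
      by (rule measurable_restrict_space1[OF X_meas[OF that]])
    have em: "emeasure (N j) C = ennreal (measure M (A \<inter> (X j -` C \<inter> space M)))"
      if "j \<ge> 1" "C \<in> sets borel" for j C
    proof -
      have "emeasure (N j) C = emeasure (restrict_space M A) (X j -` C \<inter> space (restrict_space M A))"
        unfolding N_def by (rule emeasure_distr[OF Xr[OF that(1)] that(2)])
      also have "\<dots> = emeasure M (X j -` C \<inter> (A \<inter> space M))"
        by (subst space_restrict_space, rule emeasure_restrict_space[OF AO]) auto
      also have "X j -` C \<inter> (A \<inter> space M) = A \<inter> (X j -` C \<inter> space M)" by blast
      finally show ?thesis by (simp add: emeasure_eq_measure)
    qed
    have eqN: "N (n + k) = N (n + 1)"
    proof (rule measure_eqI)
      show "sets (N (n + k)) = sets (N (n + 1))" by (simp add: N_def)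
      fix C assume "C \<in> sets (N (n + k))"
      then have C: "C \<in> sets borel" by (simp add: N_def)
      show "emeasure (N (n + k)) C = emeasure (N (n + 1)) C"
        using em[of "n + k" C] em[of "n + 1" C] gen_set_eq[OF k A C] k C by simp
    qed
    have intN: "integral\<^sup>L (N j) f = set_lebesgue_integral M A (\<lambda>\<omega>. f (X j \<omega>))" if "j \<ge> 1" for j
    proof -
      have "integral\<^sup>L (N j) f = integral\<^sup>L (restrict_space M A) (\<lambda>\<omega>. f (X j \<omega>))"
        unfolding N_def by (rule integral_distr[OF Xr[OF that] fm])
      also have "\<dots> = set_lebesgue_integral M A (\<lambda>\<omega>. f (X j \<omega>))"
        unfolding set_lebesgue_integral_def by (rule integral_restrict_space[OF AO])
      finally show ?thesis .
    qed
    have "n + k \<ge> 1" using k by simp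
    then show ?thesis using intN[of "n + k"] intN[of "n + 1"] eqN by simp
  qed
  show ?thesis
  proof (rule Gs.real_cond_exp_charact)
    fix A assume A: "A \<in> sets (gen_sigma M borel X {1..n})"
    show "set_lebesgue_integral M A (\<lambda>\<omega>. f (X (n + k) \<omega>))
        = set_lebesgue_integral M A (real_cond_exp M (gen_sigma M borel X {1..n}) (\<lambda>\<omega>. f (X (n + 1) \<omega>)))"
      using seteq[OF A] Gs.real_cond_exp_intA[OF fX A, of "n + 1"] by simp
  next
    show "integrable M (\<lambda>\<omega>. f (X (n + k) \<omega>))" by (rule fX) (use k in simp)
    show "integrable M (real_cond_exp M (gen_sigma M borel X {1..n}) (\<lambda>\<omega>. f (X (n + 1) \<omega>)))"
      by (rule Gs.real_cond_exp_int(1)[OF fX]) simp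
    show "real_cond_exp M (gen_sigma M borel X {1..n}) (\<lambda>\<omega>. f (X (n + 1) \<omega>)) \<in> borel_measurable (gen_sigma M borel X {1..n})"
      by (rule borel_measurable_cond_exp)
  qed
qed

end

theorem mainTheorem1:
  fixes M :: "'w measure"
    and X :: "nat \<Rightarrow> 'w \<Rightarrow> 'a :: polish_space"
    and F :: "nat \<Rightarrow> 'w \<Rightarrow> 'a measure"
  assumes "prob_space M"
    and X_meas: "\<And>n. n \<ge> 1 \<Longrightarrow> X n \<in> M \<rightarrow>\<^sub>M borel"
    and F_meas: "\<And>n. n \<ge> 1 \<Longrightarrow> F n \<in> M \<rightarrow>\<^sub>M prob_algebra borel"
    and cond_indep: "\<And>I A. finite I \<Longrightarrow> I \<subseteq> {1..} \<Longrightarrow> (\<And>i. i \<in> I \<Longrightarrow> A i \<in> sets borel) \<Longrightarrow>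
        AE \<omega> in M. real_cond_exp M (gen_sigma M (prob_algebra borel) F {1..})
              (\<lambda>\<omega>. \<Prod>i\<in>I. indicator (A i) (X i \<omega>)) \<omega>
            = (\<Prod>i\<in>I. measure (F i \<omega>) (A i))"
    and mart: "\<And>n A. n \<ge> 1 \<Longrightarrow> A \<in> sets borel \<Longrightarrow>
        AE \<omega> in M. real_cond_exp M (gen_sigma M (prob_algebra borel) F {1..n})
              (\<lambda>\<omega>. measure (F (Suc n) \<omega>) A) \<omega> = measure (F n \<omega>) A"
  shows "\<forall>n k (f :: 'a \<Rightarrow> real). k \<ge> 1 \<longrightarrow> f \<in> borel_measurable borel \<longrightarrow> bounded (range f) \<longrightarrow>
      (AE \<omega> in M. real_cond_exp M (gen_sigma M borel X {1..n}) (\<lambda>\<omega>. f (X (n + k) \<omega>)) \<omega>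
                 = real_cond_exp M (gen_sigma M borel X {1..n}) (\<lambda>\<omega>. f (X (n + 1) \<omega>)) \<omega>)"
proof -
  interpret c: cid_setting M X F
    by (rule cid_setting.intro[OF assms(1)], rule cid_setting_axioms.intro)
       (fact X_meas F_meas cond_indep mart)+
  show ?thesis
  proof (intro allI impI)
    fix n k :: nat and f :: "'a \<Rightarrow> real"
    assume "k \<ge> 1" "f \<in> borel_measurable borel" "bounded (range f)"
    then show "AE \<omega> in M. real_cond_exp M (gen_sigma M borel X {1..n}) (\<lambda>\<omega>. f (X (n + k) \<omega>)) \<omega>
                 = real_cond_exp M (gen_sigma M borel X {1..n}) (\<lambda>\<omega>. f (X (n + 1) \<omega>)) \<omega>"
      by (rule c.main_ae)
  qed
qed

end
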